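(* Let $a=(a_n)_{n\ge1}$ be a real sequence with $\sum_{n=1}^\infty|a_n|<\infty$, and define $$(\tilde{\Gamma}a)_n=\frac{1}{n}\sum_{k=1}^n a_k-\frac{1}{n+1}\sum_{k=1}^\infty a_k,\qquad n\ge1.$$ If $\sum_{k=1}^\infty |a_k|\ln(k+1)<\infty$, then $\sum_{n=1}^\infty|(\tilde{\Gamma}a)_n|<\infty$. Conversely, if $a_n>0$ for all $n$ and $\sum_{n=1}^\infty|(\tilde{\Gamma}a)_n|<\infty$, then $\sum_{k=1}^\infty a_k\ln(k+1)<\infty$. *)

theory Defs
  imports "HOL-Analysis.Analysis"
begin

text \<open>Sequences a = (a_n)_{n>=1} are modelled as functions nat => real whose value at 0 is ignored.
  The infinite sum over k>=1 is written as suminf of (\<lambda>k. a (Suc k)).\<close>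

definition gamma_tilde :: "(nat \<Rightarrow> real) \<Rightarrow> nat \<Rightarrow> real" where
  "gamma_tilde a n = (1 / real n) * (\<Sum>k=1..n. a k)
                     - (1 / (real n + 1)) * (\<Sum>k. a (Suc k))"

end

theory Submission
  imports Defs
begin

definition PS :: "(nat \<Rightarrow> real) \<Rightarrow> nat \<Rightarrow> real" where
  "PS b n = (\<Sum>k=1..n. b k)"

lemma harm_minus_one: "harm (Suc M) - 1 = (\<Sum>n=1..M. 1 / (real n + 1))"
proof (induction M)
  case 0 then show ?case by (simp add: harm_def)
next
  case (Suc M)
  have "harm (Suc (Suc M)) - 1 = (harm (Suc M) - 1) + inverse (real (Suc (Suc M)))"
    by (simp add: harm_Suc)
  also have "\<dots> = (\<Sum>n=1..Suc M. 1 / (real n + 1))"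
    using Suc by (simp add: field_simps)
  finally show ?case .
qed

lemma swap_sum:
  "(\<Sum>n=1..M. (PS b M - PS b n) / (real n + 1)) = (\<Sum>k=1..M. b k * (harm k - 1))"
proof (induction M)
  case 0 then show ?case by simp
next
  case (Suc M)
  have "(\<Sum>n=1..Suc M. (PS b (Suc M) - PS b n) / (real n + 1))
      = (\<Sum>n=1..M. (PS b (Suc M) - PS b n) / (real n + 1))"
    by (simp add: PS_def)
  also have "\<dots> = (\<Sum>n=1..M. (PS b M - PS b n) / (real n + 1) + b (Suc M) * (1 / (real n + 1)))"
  proof (intro sum.cong refl)
    fix n assume "n \<in> {1..M}"
    have "PS b (Suc M) = PS b M + b (Suc M)" by (simp add: PS_def)
    then show "(PS b (Suc M) - PS b n) / (real n + 1) = (PS b M - PS b n) / (real n + 1) + b (Suc M) * (1 / (real n + 1))"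
      by (simp add: add_divide_distrib diff_divide_distrib)
  qed
  also have "\<dots> = (\<Sum>n=1..M. (PS b M - PS b n) / (real n + 1)) + b (Suc M) * (harm (Suc M) - 1)"
    by (simp add: sum.distrib sum_distrib_left harm_minus_one)
  also have "\<dots> = (\<Sum>k=1..Suc M. b k * (harm k - 1))"
    using Suc by simp
  finally show ?case .
qed

lemma PS_lim:
  assumes "summable (\<lambda>k. b (Suc k))"
  shows "(\<lambda>M. PS b M) \<longlonglongrightarrow> (\<Sum>k. b (Suc k))"
proof -
  have "(\<lambda>M. \<Sum>k<M. b (Suc k)) \<longlonglongrightarrow> (\<Sum>k. b (Suc k))"
    using summable_LIMSEQ[OF assms] .
  then show ?thesis by (simp add: PS_def sum_bounds_lt_plus1)
qed

lemma PS_le: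
  assumes "summable (\<lambda>k. b (Suc k))" "\<And>k. k \<ge> 1 \<Longrightarrow> b k \<ge> 0"
  shows "PS b n \<le> (\<Sum>k. b (Suc k))"
proof -
  have "(\<Sum>k<n. b (Suc k)) \<le> (\<Sum>k. b (Suc k))"
    using assms by (intro sum_le_suminf) auto
  then show ?thesis by (simp add: PS_def sum_bounds_lt_plus1)
qed

lemma PS_mono:
  assumes "\<And>k. k \<ge> 1 \<Longrightarrow> b k \<ge> 0" "n \<le> M"
  shows "PS b n \<le> PS b M"
  unfolding PS_def using assms by (intro sum_mono2) auto

lemma tail_bound:
  assumes summ: "summable (\<lambda>k. b (Suc k))" and nn: "\<And>k. k \<ge> 1 \<Longrightarrow> b k \<ge> 0"
    and C: "\<And>M. (\<Sum>k=1..M. b k * (harm k - 1)) \<le> C"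
  shows "(\<Sum>n=1..N. ((\<Sum>k. b (Suc k)) - PS b n) / (real n + 1)) \<le> C"
proof -
  have lim: "(\<lambda>M. \<Sum>n=1..N. (PS b M - PS b n) / (real n + 1))
      \<longlonglongrightarrow> (\<Sum>n=1..N. ((\<Sum>k. b (Suc k)) - PS b n) / (real n + 1))"
    by (intro tendsto_intros PS_lim summ) auto
  have "(\<Sum>n=1..N. (PS b M - PS b n) / (real n + 1)) \<le> C" if "M \<ge> N" for M
  proof -
    have "(\<Sum>n=1..N. (PS b M - PS b n) / (real n + 1)) \<le> (\<Sum>n=1..M. (PS b M - PS b n) / (real n + 1))"
      using that by (intro sum_mono2) (auto intro!: divide_nonneg_pos PS_mono nn)
    also have "\<dots> \<le> C" using swap_sum C by metis
    finally show ?thesis .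
  qed
  then show ?thesis by (intro LIMSEQ_le_const2[OF lim]) auto
qed

lemma tail_summable:
  assumes summ: "summable (\<lambda>k. b (Suc k))" and nn: "\<And>k. k \<ge> 1 \<Longrightarrow> b k \<ge> 0"
    and C: "\<And>M. (\<Sum>k=1..M. b k * (harm k - 1)) \<le> C"
  shows "summable (\<lambda>n. ((\<Sum>k. b (Suc k)) - PS b (Suc n)) / (real (Suc n) + 1))"
proof (rule bounded_imp_summable)
  fix n
  show "0 \<le> ((\<Sum>k. b (Suc k)) - PS b (Suc n)) / (real (Suc n) + 1)"
    using PS_le[OF summ nn] by simp
next
  fix N
  have "(\<Sum>n\<le>N. ((\<Sum>k. b (Suc k)) - PS b (Suc n)) / (real (Suc n) + 1))
      = (\<Sum>n=1..Suc N. ((\<Sum>k. b (Suc k)) - PS b n) / (real n + 1))"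
  proof -
    define g where "g n = ((\<Sum>k. b (Suc k)) - PS b n) / (real n + 1)" for n
    have "(\<Sum>n\<le>N. ((\<Sum>k. b (Suc k)) - PS b (Suc n)) / (real (Suc n) + 1)) = (\<Sum>n\<in>{0..N}. g (Suc n))"
      by (simp add: g_def atMost_atLeast0)
    also have "\<dots> = (\<Sum>n\<in>{Suc 0..Suc N}. g n)" by (rule sum.shift_bounds_cl_Suc_ivl[symmetric])
    finally show ?thesis by (simp add: g_def)
  qed
  also have "\<dots> \<le> C" by (rule tail_bound[OF summ nn C])
  finally show "(\<Sum>n\<le>N. ((\<Sum>k. b (Suc k)) - PS b (Suc n)) / (real (Suc n) + 1)) \<le> C" .
qed

lemma harm_le_ln: "k \<ge> 1 \<Longrightarrow> harm k - 1 \<le> ln (real k + 1)"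
proof -
  assume k: "k \<ge> 1"
  have "harm k - ln (real k) \<le> harm 1 - ln (real 1)"
    using euler_mascheroni_sequence_decreasing[of 1 k] k by simp
  moreover have "ln (real k) \<le> ln (real k + 1)" using k by simp
  ultimately show ?thesis by (simp add: harm_def)
qed

lemma summable_inv_sq: "summable (\<lambda>n. 1 / (real (Suc n) * (real (Suc n) + 1)))"
proof -
  have "summable (\<lambda>n. inverse (real n ^ 2))"
    using inverse_power_summable[of 2] by simp
  then have s: "summable (\<lambda>n. inverse (real (Suc n) ^ 2))"
    using summable_Suc_iff[where f="\<lambda>n. inverse (real n ^ 2)"] by simp
  show ?thesis
  proof (rule summable_comparison_test'[OF s])
    fix n :: nat
    have "real (Suc n) ^ 2 \<le> real (Suc n) * (real (Suc n) + 1)"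
      by (simp add: power2_eq_square)
    then show "norm (1 / (real (Suc n) * (real (Suc n) + 1))) \<le> inverse (real (Suc n) ^ 2)"
      by (simp add: divide_simps power2_eq_square del: of_nat_Suc)
  qed
qed

lemma gamma_eq:
  "gamma_tilde a (Suc n) = PS a (Suc n) / (real (Suc n) * (real (Suc n) + 1))
     - ((\<Sum>k. a (Suc k)) - PS a (Suc n)) / (real (Suc n) + 1)"
proof -
  have alg: "A / m - S / (m + 1) = A / (m * (m + 1)) - (S - A) / (m + 1)" if "m > 0" for A S m :: real
  proof -
    have "m \<noteq> 0" "m + 1 \<noteq> 0" using that by auto
    then show ?thesis by (simp add: divide_simps) (simp add: algebra_simps)
  qed
  show ?thesis unfolding gamma_tilde_def PS_def using alg[of "real (Suc n)"] by simp
qed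



lemma diff_abs_bound:
  assumes "m \<le> M"
  shows "\<bar>PS a M - PS a m\<bar> \<le> PS (\<lambda>k. \<bar>a k\<bar>) M - PS (\<lambda>k. \<bar>a k\<bar>) m"
  using assms
proof (induction M rule: dec_induct)
  case base then show ?case by simp
next
  case (step M)
  have "PS a (Suc M) = PS a M + a (Suc M)" "PS (\<lambda>k. \<bar>a k\<bar>) (Suc M) = PS (\<lambda>k. \<bar>a k\<bar>) M + \<bar>a (Suc M)\<bar>"
    by (simp_all add: PS_def)
  then show ?case using step.IH by simp
qed

theorem theorem3p4:
  fixes a :: "nat \<Rightarrow> real"
  assumes abs_sum: "summable (\<lambda>k. \<bar>a (Suc k)\<bar>)"
  shows "(summable (\<lambda>k. \<bar>a (Suc k)\<bar> * ln (real (Suc k) + 1))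
            \<longrightarrow> summable (\<lambda>n. \<bar>gamma_tilde a (Suc n)\<bar>))
       \<and> ((\<forall>n\<ge>1. a n > 0) \<and> summable (\<lambda>n. \<bar>gamma_tilde a (Suc n)\<bar>)
            \<longrightarrow> summable (\<lambda>k. a (Suc k) * ln (real (Suc k) + 1)))"
proof -
  define S where "S = (\<Sum>k. a (Suc k))"
  define Sa where "Sa = (\<Sum>k. \<bar>a (Suc k)\<bar>)"
  have summa: "summable (\<lambda>k. a (Suc k))"
    using abs_sum by (rule summable_rabs_cancel)
  have F1: "\<bar>PS a m\<bar> \<le> Sa" for m
  proof -
    have "\<bar>PS a m\<bar> \<le> PS (\<lambda>k. \<bar>a k\<bar>) m" unfolding PS_def by (rule sum_abs)
    also have "\<dots> \<le> Sa" unfolding Sa_def using PS_le[of "\<lambda>k. \<bar>a k\<bar>"] abs_sum by auto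
    finally show ?thesis .
  qed
  have F2: "\<bar>S - PS a m\<bar> \<le> Sa - PS (\<lambda>k. \<bar>a k\<bar>) m" for m
  proof -
    have l1: "(\<lambda>M. \<bar>PS a M - PS a m\<bar>) \<longlonglongrightarrow> \<bar>S - PS a m\<bar>"
      unfolding S_def by (intro tendsto_intros PS_lim summa)
    have l2: "(\<lambda>M. PS (\<lambda>k. \<bar>a k\<bar>) M - PS (\<lambda>k. \<bar>a k\<bar>) m) \<longlonglongrightarrow> Sa - PS (\<lambda>k. \<bar>a k\<bar>) m"
      unfolding Sa_def using PS_lim[of "\<lambda>k. \<bar>a k\<bar>"] abs_sum by (intro tendsto_intros) auto
    show ?thesis
      by (rule tendsto_le[OF _ l2 l1]) (auto intro: eventually_mono[OF eventually_ge_at_top[of m]] diff_abs_bound)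
  qed
  have inv: "summable (\<lambda>n. c * (1 / (real (Suc n) * (real (Suc n) + 1))))" for c
    using summable_inv_sq by (rule summable_mult)
  have part1: "summable (\<lambda>n. \<bar>gamma_tilde a (Suc n)\<bar>)"
    if H: "summable (\<lambda>k. \<bar>a (Suc k)\<bar> * ln (real (Suc k) + 1))"
  proof -
    define C where "C = (\<Sum>k. \<bar>a (Suc k)\<bar> * ln (real (Suc k) + 1))"
    have Cb: "(\<Sum>k=1..M. \<bar>a k\<bar> * (harm k - 1)) \<le> C" for M
    proof -
      have "(\<Sum>k=1..M. \<bar>a k\<bar> * (harm k - 1)) \<le> (\<Sum>k=1..M. \<bar>a k\<bar> * ln (real k + 1))"
        by (intro sum_mono mult_left_mono harm_le_ln) auto
      also have "\<dots> = (\<Sum>k<M. \<bar>a (Suc k)\<bar> * ln (real (Suc k) + 1))"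
        by (rule sum_bounds_lt_plus1[symmetric])
      also have "\<dots> \<le> C" unfolding C_def using H by (intro sum_le_suminf) auto
      finally show ?thesis .
    qed
    have ts: "summable (\<lambda>n. (Sa - PS (\<lambda>k. \<bar>a k\<bar>) (Suc n)) / (real (Suc n) + 1))"
      unfolding Sa_def by (rule tail_summable[OF abs_sum _ Cb]) auto
    show ?thesis
    proof (rule summable_comparison_test'[OF summable_add[OF inv[of Sa] ts]])
      fix n :: nat
      have "\<bar>gamma_tilde a (Suc n)\<bar> \<le> \<bar>PS a (Suc n)\<bar> / (real (Suc n) * (real (Suc n) + 1))
          + \<bar>S - PS a (Suc n)\<bar> / (real (Suc n) + 1)"
        unfolding gamma_eq S_def by (rule order_trans[OF abs_triangle_ineq4]) (simp add: abs_divide abs_mult del: of_nat_Suc)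
      also have "\<dots> \<le> Sa / (real (Suc n) * (real (Suc n) + 1))
          + (Sa - PS (\<lambda>k. \<bar>a k\<bar>) (Suc n)) / (real (Suc n) + 1)"
        by (intro add_mono divide_right_mono F1 F2) auto
      finally show "norm \<bar>gamma_tilde a (Suc n)\<bar> \<le> Sa * (1 / (real (Suc n) * (real (Suc n) + 1)))
          + (Sa - PS (\<lambda>k. \<bar>a k\<bar>) (Suc n)) / (real (Suc n) + 1)" by simp
    qed
  qed
  have part2: "summable (\<lambda>k. a (Suc k) * ln (real (Suc k) + 1))"
    if pos: "\<forall>n\<ge>1. a n > 0" and G: "summable (\<lambda>n. \<bar>gamma_tilde a (Suc n)\<bar>)"
  proof -
    have nn: "\<And>k. k \<ge> 1 \<Longrightarrow> a k \<ge> 0" using pos by (simp add: less_imp_le)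
    define f where "f n = (S - PS a (Suc n)) / (real (Suc n) + 1)" for n
    have f0: "f n \<ge> 0" for n
      unfolding f_def S_def using PS_le[OF summa nn] by simp
    have fs: "summable f"
    proof (rule summable_comparison_test'[OF summable_add[OF inv[of S] G]])
      fix n :: nat
      have "f n = PS a (Suc n) / (real (Suc n) * (real (Suc n) + 1)) - gamma_tilde a (Suc n)"
        unfolding f_def gamma_eq S_def by simp
      also have "\<dots> \<le> S * (1 / (real (Suc n) * (real (Suc n) + 1))) + \<bar>gamma_tilde a (Suc n)\<bar>"
      proof -
        have h: "PS a (Suc n) \<le> S"
          using PS_le[OF summa nn, of "Suc n"] unfolding S_def by simp
        have "PS a (Suc n) / (real (Suc n) * (real (Suc n) + 1)) \<le> S / (real (Suc n) * (real (Suc n) + 1))"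
          using h by (intro divide_right_mono) auto
        moreover have "- gamma_tilde a (Suc n) \<le> \<bar>gamma_tilde a (Suc n)\<bar>" by simp
        ultimately show ?thesis by simp
      qed
      finally show "norm (f n) \<le> S * (1 / (real (Suc n) * (real (Suc n) + 1))) + \<bar>gamma_tilde a (Suc n)\<bar>"
        using f0[of n] by simp
    qed
    define D where "D = suminf f"
    have Db: "(\<Sum>k=1..M. a k * (harm k - 1)) \<le> D" for M
    proof -
      have "(\<Sum>k=1..M. a k * (harm k - 1)) = (\<Sum>n=1..M. (PS a M - PS a n) / (real n + 1))"
        by (rule swap_sum[symmetric])
      also have "\<dots> \<le> (\<Sum>n=1..M. (S - PS a n) / (real n + 1))"
        using PS_le[OF summa nn, of M] unfolding S_def[symmetric]
        by (intro sum_mono divide_right_mono) auto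
      also have "\<dots> = (\<Sum>n<M. f n)"
        unfolding f_def by (rule sum_bounds_lt_plus1[symmetric])
      also have "\<dots> \<le> D" unfolding D_def using fs f0 by (intro sum_le_suminf) auto
      finally show ?thesis .
    qed
    show ?thesis
    proof (rule bounded_imp_summable)
      fix n show "0 \<le> a (Suc n) * ln (real (Suc n) + 1)" using nn[of "Suc n"] by simp
    next
      fix N
      have "(\<Sum>k\<le>N. a (Suc k) * ln (real (Suc k) + 1)) = (\<Sum>k=1..Suc N. a k * ln (real k + 1))"
        unfolding lessThan_Suc_atMost[symmetric] by (rule sum_bounds_lt_plus1)
      also have "\<dots> \<le> (\<Sum>k=1..Suc N. a k * (harm k - 1) + a k)"
      proof (intro sum_mono)
        fix k assume "k \<in> {1..Suc N}"
        then have "a k \<ge> 0" using nn by auto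
        then have "a k * ln (real k + 1) \<le> a k * harm k"
          by (intro mult_left_mono ln_le_harm)
        then show "a k * ln (real k + 1) \<le> a k * (harm k - 1) + a k" by (simp add: algebra_simps)
      qed
      also have "\<dots> = (\<Sum>k=1..Suc N. a k * (harm k - 1)) + PS a (Suc N)"
        by (simp add: sum.distrib PS_def)
      also have "\<dots> \<le> D + S"
        using Db[of "Suc N"] PS_le[OF summa nn, of "Suc N"] unfolding S_def by (rule add_mono)
      finally show "(\<Sum>k\<le>N. a (Suc k) * ln (real (Suc k) + 1)) \<le> D + S" .
    qed
  qed
  show ?thesis using part1 part2 by blast
qed

end
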